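(* For any simplicial model $\mathcal{C}=(\mathcal{V},C,\chi,\ell)$, $\mathtt{LEM}(\mathcal{C})$ is a proper local epistemic model such that for every facet $F\in\mathcal{F}(C)$ and every sentence $\alpha$, $\mathcal{C},F\Vdash\alpha$ iff $\mathtt{LEM}(\mathcal{C}),F\vDash\alpha$. For any local epistemic model $\mathcal{M}=(W,\delta,\{R_a\}_{a\in\mathbf{A}},\rho)$, $\mathtt{SC}(\mathcal{M})$ is a simplicial model whose set of facets is $\{F^{\mathcal M}_w\mid w\in W\}$, and for every $w\in W$ and every sentence $\alpha$, $\mathcal{M},w\vDash\alpha$ iff $\mathtt{SC}(\mathcal{M}),F^{\mathcal M}_w\Vdash\alpha$.
   Context: Fix a nonempty finite set $\mathbf{A}$ of agents, a countable set $\mathbf{X}$ of variables disjoint from $\mathbf{A}$, and a countable set $\mathbf{P}$ of predicate letters. Formulas of $\mathcal{L}$: $\phi ::= p_x \mid \top \mid \neg\phi \mid (\phi\wedge\phi) \mid [x:=a]\phi \mid \mathsf{K}_X\alpha$ ($p\in\mathbf{P}$, $x\in\mathbf{X}$, $a\in\mathbf{A}$, $X\subseteq\mathbf{X}$ finite possibly empty, $\alpha$ without free variables), with $FV(p_x)=\{x\}$, $FV(\top)=\emptyset$, $FV$ of $\neg,\wedge$ as usual, $FV([x:=a]\phi)=FV(\phi)\setminus\{x\}$, $FV(\mathsf{K}_X\alpha)=X$; sentences have no free variables. A simplicial model is $\mathcal{C}=(\mathcal{V},C,\chi,\ell)$: $\mathcal{V}\neq\emptyset$; $C\subseteq\wp(\mathcal{V})$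 with $\emptyset\notin C$, closed under nonempty subsets, containing all singletons; $\chi:\mathcal{V}\to\mathbf{A}$ injective on every member of $C$; $\ell:\mathbf{P}\to\wp(\mathcal{V})$; facets $\mathcal{F}(C)$ are the inclusion-maximal members of $C$. A first-order Kripke model is $\mathcal{M}=(W,\delta,\{R_a\}_{a\in\mathbf{A}},\rho)$: $W\neq\emptyset$, $\delta:W\to\wp(\mathbf{A})\setminus\{\emptyset\}$, $R_a\subseteq W\times W$ with $R_a(w)=\emptyset$ if $a\notin\delta(w)$, $\rho:\mathbf{P}\times W\to\wp(\mathbf{A})$ with $\rho(p,w)\subseteq\delta(w)$. Semantics, with assignments $\sigma:\mathbf{X}\to\mathbf{A}$ admissible ($\sigma[FV(\phi)]\subseteq\chi[F]$, resp. $\subseteq\delta(w)$), Booleans standard: $\mathcal{C},F,\sigma\Vdash p_x$ iff $\sigma(x)\in\chi[F\cap\ell(p)]$; $\mathcal{C},F,\sigma\Vdash[x:=a]\phi$ iff ($a\in\chi[F]$ implies $\mathcal{C},F,\sigma[x\mapsto a]\Vdash\phi$); $\mathcal{C},F,\sigma\Vdash\mathsf{K}_X\alpha$ iff $\mathcal{C},G,\sigma\Vdash\alpha$ for all $G\in\mathcal{F}(C)$ with $\sigma[X]\subseteq\chi[F\cap G]$. $\mathcal{M},w,\sigma\vDash p_x$ iff $\sigma(x)\in\rho(p,w)$; $\mathcal{M},w,\sigma\vDash[x:=a]\phi$ iff ($a\in\delta(w)$ implies $\mathcal{M},w,\sigma[x\mapsto a]\vDash\phi$); $\mathcal{M},w,\sigma\vDash\mathsf{K}_X\alpha$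 iff $\mathcal{M},v,\sigma\vDash\alpha$ for all $v\in\bigcap_{a\in\sigma[X]}R_a(w)$ (empty intersection $=W$). Truth of sentences does not depend on the assignment. $\mathcal{M}$ is a local epistemic model if: for each $a$ the restriction of $R_a$ to $\{w\mid a\in\delta(w)\}$ is an equivalence relation; $wR_av$ and $a\in\delta(w)$ imply $a\in\delta(v)$; $wR_av$ and $a\in\rho(p,w)$ imply $a\in\rho(p,v)$; $v\in\bigcap_{a\in\delta(w)}R_a(w)$ implies $\delta(v)\subseteq\delta(w)$. It is proper if additionally $\bigcap_{a\in\delta(w)}R_a(w)=\{w\}$ for all $w$. $\mathtt{LEM}(\mathcal{C})=(W^{\mathcal C},\delta^{\mathcal C},\{R^{\mathcal C}_a\},\rho^{\mathcal C})$ where $W^{\mathcal C}=\mathcal{F}(C)$, $\delta^{\mathcal C}(F)=\chi[F]$, $R^{\mathcal C}_a=\{(F,G)\mid a\in\chi[F\cap G]\}$, $\rho^{\mathcal C}(p,F)=\chi[F\cap\ell(p)]$. For a local epistemic model $\mathcal{M}$, let $[w]_a=R_a(w)$ and $F^{\mathcal M}_w=\{(a,[w]_a)\mid a\in\delta(w)\}$; $\mathtt{SC}(\mathcal{M})=(\mathcal{V}^{\mathcal M},C^{\mathcal M},\chi^{\mathcal M},\ell^{\mathcal M})$ where $\mathcal{V}^{\mathcal M}=\{(a,[w]_a)\mid w\in W, a\in\delta(w)\}$, $C^{\mathcal M}=\{X\subseteq\mathcal{V}^{\mathcal M}\mid X\neq\emptyset, X\subseteq F^{\mathcal M}_w\text{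 for some }w\in W\}$, $\chi^{\mathcal M}(a,[w]_a)=a$, and $\ell^{\mathcal M}(p)=\{(a,[w]_a)\mid a\in\rho(p,w)\}$. *)

theory Defs
  imports Main "HOL-Library.Countable"
begin

text \<open>Formulas over predicate letters 'p, variables 'x and agents 'a.
  The index set of K is an 'x set; well-formedness (finiteness of X and
  closedness of the argument of K) is imposed by wf_form.\<close>

datatype ('p, 'x, 'a) form =
    Pred 'p 'x
  | Top
  | Neg "('p, 'x, 'a) form"
  | Conj "('p, 'x, 'a) form" "('p, 'x, 'a) form"
  | Assign 'x 'a "('p, 'x, 'a) form"
  | K "'x set" "('p, 'x, 'a) form"

fun FV :: "('p, 'x, 'a) form \<Rightarrow> 'x set" where
  "FV (Pred p x) = {x}"
| "FV Top = {}"
| "FV (Neg \<phi>) = FV \<phi>"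
| "FV (Conj \<phi> \<psi>) = FV \<phi> \<union> FV \<psi>"
| "FV (Assign x a \<phi>) = FV \<phi> - {x}"
| "FV (K X \<alpha>) = X"

fun wf_form :: "('p, 'x, 'a) form \<Rightarrow> bool" where
  "wf_form (Pred p x) = True"
| "wf_form Top = True"
| "wf_form (Neg \<phi>) = wf_form \<phi>"
| "wf_form (Conj \<phi> \<psi>) = (wf_form \<phi> \<and> wf_form \<psi>)"
| "wf_form (Assign x a \<phi>) = wf_form \<phi>"
| "wf_form (K X \<alpha>) = (finite X \<and> wf_form \<alpha> \<and> FV \<alpha> = {})"

definition sentence :: "('p, 'x, 'a) form \<Rightarrow> bool" where
  "sentence \<phi> \<longleftrightarrow> wf_form \<phi> \<and> FV \<phi> = {}"

datatype ('v, 'a, 'p) smodel =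
  SM (sV: "'v set") (sC: "'v set set") (chi: "'v \<Rightarrow> 'a") (lab: "'p \<Rightarrow> 'v set")

definition simplicial_model :: "('v, 'a, 'p) smodel \<Rightarrow> bool" where
  "simplicial_model S \<longleftrightarrow>
     sV S \<noteq> {} \<and>
     (\<forall>X\<in>sC S. X \<subseteq> sV S) \<and>
     {} \<notin> sC S \<and>
     (\<forall>X\<in>sC S. \<forall>Y. Y \<noteq> {} \<and> Y \<subseteq> X \<longrightarrow> Y \<in> sC S) \<and>
     (\<forall>v\<in>sV S. {v} \<in> sC S) \<and>
     (\<forall>X\<in>sC S. inj_on (chi S) X)"

definition facets :: "('v, 'a, 'p) smodel \<Rightarrow> 'v set set" where
  "facets S = {F \<in> sC S. \<forall>G\<in>sC S. F \<subseteq> G \<longrightarrow> G = F}"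

fun sat_sc :: "('v, 'a, 'p) smodel \<Rightarrow> 'v set \<Rightarrow> ('x \<Rightarrow> 'a) \<Rightarrow> ('p, 'x, 'a) form \<Rightarrow> bool" where
  "sat_sc S F \<sigma> (Pred p x) = (\<sigma> x \<in> chi S ` (F \<inter> lab S p))"
| "sat_sc S F \<sigma> Top = True"
| "sat_sc S F \<sigma> (Neg \<phi>) = (\<not> sat_sc S F \<sigma> \<phi>)"
| "sat_sc S F \<sigma> (Conj \<phi> \<psi>) = (sat_sc S F \<sigma> \<phi> \<and> sat_sc S F \<sigma> \<psi>)"
| "sat_sc S F \<sigma> (Assign x a \<phi>) = (a \<in> chi S ` F \<longrightarrow> sat_sc S F (\<sigma>(x := a)) \<phi>)"
| "sat_sc S F \<sigma> (K X \<alpha>) =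
     (\<forall>G\<in>facets S. \<sigma> ` X \<subseteq> chi S ` (F \<inter> G) \<longrightarrow> sat_sc S G \<sigma> \<alpha>)"

datatype ('w, 'a, 'p) kmodel =
  KM (kW: "'w set") (kdelta: "'w \<Rightarrow> 'a set") (kR: "'a \<Rightarrow> 'w rel") (krho: "'p \<Rightarrow> 'w \<Rightarrow> 'a set")

definition kripke_model :: "('w, 'a, 'p) kmodel \<Rightarrow> bool" where
  "kripke_model M \<longleftrightarrow>
     kW M \<noteq> {} \<and>
     (\<forall>w\<in>kW M. kdelta M w \<noteq> {}) \<and>
     (\<forall>a. kR M a \<subseteq> kW M \<times> kW M) \<and>
     (\<forall>a. \<forall>w\<in>kW M. a \<notin> kdelta M w \<longrightarrow> kR M a `` {w} = {}) \<and>
     (\<forall>p. \<forall>w\<in>kW M. krho M p w \<subseteq> kdelta M w)"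

text \<open>The intersection of R_a(w) over a in A, with the empty intersection being W.\<close>
definition isect :: "('w, 'a, 'p) kmodel \<Rightarrow> 'a set \<Rightarrow> 'w \<Rightarrow> 'w set" where
  "isect M A w = {v \<in> kW M. \<forall>a\<in>A. (w, v) \<in> kR M a}"

fun sat_k :: "('w, 'a, 'p) kmodel \<Rightarrow> 'w \<Rightarrow> ('x \<Rightarrow> 'a) \<Rightarrow> ('p, 'x, 'a) form \<Rightarrow> bool" where
  "sat_k M w \<sigma> (Pred p x) = (\<sigma> x \<in> krho M p w)"
| "sat_k M w \<sigma> Top = True"
| "sat_k M w \<sigma> (Neg \<phi>) = (\<not> sat_k M w \<sigma> \<phi>)"
| "sat_k M w \<sigma> (Conj \<phi> \<psi>) = (sat_k M w \<sigma> \<phi> \<and> sat_k M w \<sigma> \<psi>)"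
| "sat_k M w \<sigma> (Assign x a \<phi>) = (a \<in> kdelta M w \<longrightarrow> sat_k M w (\<sigma>(x := a)) \<phi>)"
| "sat_k M w \<sigma> (K X \<alpha>) = (\<forall>v\<in>isect M (\<sigma> ` X) w. sat_k M v \<sigma> \<alpha>)"

definition local_epistemic :: "('w, 'a, 'p) kmodel \<Rightarrow> bool" where
  "local_epistemic M \<longleftrightarrow>
     kripke_model M \<and>
     (\<forall>a. let D = {w \<in> kW M. a \<in> kdelta M w} in equiv D (kR M a \<inter> D \<times> D)) \<and>
     (\<forall>a w v. (w, v) \<in> kR M a \<and> a \<in> kdelta M w \<longrightarrow> a \<in> kdelta M v) \<and>
     (\<forall>a w v p. (w, v) \<in> kR M a \<and> a \<in> krho M p w \<longrightarrow> a \<in> krho M p v) \<and>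
     (\<forall>w\<in>kW M. \<forall>v\<in>isect M (kdelta M w) w. kdelta M v \<subseteq> kdelta M w)"

definition proper_local_epistemic :: "('w, 'a, 'p) kmodel \<Rightarrow> bool" where
  "proper_local_epistemic M \<longleftrightarrow>
     local_epistemic M \<and> (\<forall>w\<in>kW M. isect M (kdelta M w) w = {w})"

definition LEM :: "('v, 'a, 'p) smodel \<Rightarrow> ('v set, 'a, 'p) kmodel" where
  "LEM S = KM (facets S) (\<lambda>F. chi S ` F)
     (\<lambda>a. {(F, G). F \<in> facets S \<and> G \<in> facets S \<and> a \<in> chi S ` (F \<inter> G)})
     (\<lambda>p F. chi S ` (F \<inter> lab S p))"

definition Fw :: "('w, 'a, 'p) kmodel \<Rightarrow> 'w \<Rightarrow> ('a \<times> 'w set) set" where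
  "Fw M w = {(a, kR M a `` {w}) | a. a \<in> kdelta M w}"

definition SC :: "('w, 'a, 'p) kmodel \<Rightarrow> ('a \<times> 'w set, 'a, 'p) smodel" where
  "SC M = SM {(a, kR M a `` {w}) | w a. w \<in> kW M \<and> a \<in> kdelta M w}
     {X. X \<noteq> {} \<and> (\<exists>w\<in>kW M. X \<subseteq> Fw M w)}
     fst
     (\<lambda>p. {(a, kR M a `` {w}) | w a. w \<in> kW M \<and> a \<in> krho M p w})"

end

theory Submission
  imports Defs
begin

lemma simplex_finite:
  fixes S :: "('v, 'a::finite, 'p) smodel"
  assumes "simplicial_model S" "X \<in> sC S"
  shows "finite X" "card X \<le> card (UNIV::'a set)"
proof -
  have inj: "inj_on (chi S) X" using assms unfolding simplicial_model_def by blast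
  show "finite X" using inj finite_imageD[of "chi S" X] by (simp add: finite_subset)
  show "card X \<le> card (UNIV::'a set)" using card_inj_on_le[OF inj, of UNIV] by simp
qed

lemma facet_exists:
  fixes S :: "('v, 'a::finite, 'p) smodel"
  assumes sm: "simplicial_model S" and X: "X \<in> sC S"
  shows "\<exists>F\<in>facets S. X \<subseteq> F"
proof -
  let ?N = "card ` {Y \<in> sC S. X \<subseteq> Y}"
  have fin: "finite ?N" by (rule finite_subset[of _ "{..card (UNIV::'a set)}"]) (auto dest: simplex_finite[OF sm])
  have ne: "?N \<noteq> {}" using X by auto
  obtain Y where Y: "Y \<in> sC S" "X \<subseteq> Y" "card Y = Max ?N"
    using Max_in[OF fin ne] by auto
  have "\<forall>G\<in>sC S. Y \<subseteq> G \<longrightarrow> G = Y"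
  proof (intro ballI impI)
    fix G assume G: "G \<in> sC S" "Y \<subseteq> G"
    then have "card G \<le> card Y" using Y Max_ge[OF fin, of "card G"] by auto
    moreover have "finite G" using simplex_finite[OF sm G(1)] by simp
    ultimately show "G = Y" using G(2) card_seteq by blast
  qed
  then have "Y \<in> facets S" using Y(1) unfolding facets_def by blast
  thus ?thesis using Y by blast
qed

lemma part1_sat:
  assumes "F \<in> facets S"
  shows "sat_sc S F \<sigma> \<alpha> \<longleftrightarrow> sat_k (LEM S) F \<sigma> \<alpha>"
  using assms
proof (induction \<alpha> arbitrary: F \<sigma>)
  case (K X \<alpha>)
  show ?case
  proof
    assume L: "sat_sc S F \<sigma> (K X \<alpha>)"
    show "sat_k (LEM S) F \<sigma> (K X \<alpha>)"
      unfolding sat_k.simps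
    proof
      fix G assume "G \<in> isect (LEM S) (\<sigma> ` X) F"
      then have G: "G \<in> facets S" "\<sigma> ` X \<subseteq> chi S ` (F \<inter> G)"
        by (auto simp: LEM_def isect_def)
      then show "sat_k (LEM S) G \<sigma> \<alpha>" using L K.IH[OF G(1)] by auto
    qed
  next
    assume R: "sat_k (LEM S) F \<sigma> (K X \<alpha>)"
    show "sat_sc S F \<sigma> (K X \<alpha>)"
      unfolding sat_sc.simps
    proof (intro ballI impI)
      fix G assume G: "G \<in> facets S" "\<sigma> ` X \<subseteq> chi S ` (F \<inter> G)"
      then have "G \<in> isect (LEM S) (\<sigma> ` X) F" using K.prems
        by (auto simp: LEM_def isect_def)
      then show "sat_sc S G \<sigma> \<alpha>" using R K.IH[OF G(1)] by auto
    qed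
  qed
qed (auto simp: LEM_def)

lemma LEM_R: "(F, G) \<in> kR (LEM S) a \<longleftrightarrow> F \<in> facets S \<and> G \<in> facets S \<and> a \<in> chi S ` (F \<inter> G)"
  by (simp add: LEM_def)

lemma LEM_W: "kW (LEM S) = facets S" and LEM_d: "kdelta (LEM S) F = chi S ` F"
  by (simp_all add: LEM_def)

lemma part1_proper:
  fixes S :: "('v, 'a::finite, 'p) smodel"
  assumes sm: "simplicial_model S"
  shows "proper_local_epistemic (LEM S)"
proof -
  have inj: "\<And>X. X \<in> sC S \<Longrightarrow> inj_on (chi S) X" using sm unfolding simplicial_model_def by blast
  have fC: "\<And>F. F \<in> facets S \<Longrightarrow> F \<in> sC S" unfolding facets_def by blast
  have fne: "\<And>F. F \<in> facets S \<Longrightarrow> F \<noteq> {}" using sm fC unfolding simplicial_model_def by metis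
  obtain v where "v \<in> sV S" using sm unfolding simplicial_model_def by blast
  then have "{v} \<in> sC S" using sm unfolding simplicial_model_def by blast
  then have Wne: "facets S \<noteq> {}" using facet_exists[OF sm] by blast
  have km: "kripke_model (LEM S)"
    unfolding kripke_model_def LEM_def using Wne fne by auto
  have tr: "a \<in> chi S ` (F \<inter> H)" if h: "a \<in> chi S ` (F \<inter> G)" "a \<in> chi S ` (G \<inter> H)" "G \<in> facets S" for a F G H
  proof -
    obtain u where u: "u \<in> F" "u \<in> G" "chi S u = a" using h(1) by blast
    obtain w where w: "w \<in> G" "w \<in> H" "chi S w = a" using h(2) by blast
    have "u = w" using inj[OF fC[OF h(3)]] u w by (auto dest: inj_onD)
    thus ?thesis using u w by auto
  qed
  have eq: "equiv D (kR (LEM S) a \<inter> D \<times> D)" if hD: "D = {w \<in> kW (LEM S). a \<in> kdelta (LEM S) w}" for a D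
  proof (rule equivI)
    show "refl_on D (kR (LEM S) a \<inter> D \<times> D)"
    proof (rule refl_onI)
      fix x assume "x \<in> D"
      then show "(x, x) \<in> kR (LEM S) a \<inter> D \<times> D" unfolding hD by (auto simp: LEM_R LEM_W LEM_d)
    qed
    show "kR (LEM S) a \<inter> D \<times> D \<subseteq> D \<times> D" by blast
    show "sym (kR (LEM S) a \<inter> D \<times> D)"
    proof (rule symI)
      fix x y assume "(x, y) \<in> kR (LEM S) a \<inter> D \<times> D"
      then show "(y, x) \<in> kR (LEM S) a \<inter> D \<times> D" by (auto simp: LEM_R Int_commute)
    qed
    show "trans (kR (LEM S) a \<inter> D \<times> D)"
    proof (rule transI)
      fix x y z assume "(x, y) \<in> kR (LEM S) a \<inter> D \<times> D" "(y, z) \<in> kR (LEM S) a \<inter> D \<times> D"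
      then have "x \<in> facets S" "y \<in> facets S" "z \<in> facets S" "a \<in> chi S ` (x \<inter> y)" "a \<in> chi S ` (y \<inter> z)"
        "x \<in> D" "z \<in> D" by (auto simp: LEM_R)
      then show "(x, z) \<in> kR (LEM S) a \<inter> D \<times> D" using tr[of a x y z] by (simp add: LEM_R)
    qed
  qed
  have rho: "a \<in> krho (LEM S) p G" if h: "(F, G) \<in> kR (LEM S) a" "a \<in> krho (LEM S) p F" for a F G p
  proof -
    from h have F: "F \<in> facets S" "G \<in> facets S" by (auto simp: LEM_def)
    obtain u where u: "u \<in> F" "u \<in> G" "chi S u = a" using h(1) by (auto simp: LEM_def)
    obtain w where w: "w \<in> F" "w \<in> lab S p" "chi S w = a" using h(2) by (auto simp: LEM_def)
    have "u = w" using inj[OF fC[OF F(1)]] u w by (auto dest: inj_onD)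
    thus ?thesis using u w by (auto simp: LEM_def)
  qed
  have prp: "isect (LEM S) (kdelta (LEM S) F) F = {F}" if F: "F \<in> facets S" for F
  proof
    show "{F} \<subseteq> isect (LEM S) (kdelta (LEM S) F) F" using F by (auto simp: LEM_def isect_def)
    show "isect (LEM S) (kdelta (LEM S) F) F \<subseteq> {F}"
    proof
      fix G assume G: "G \<in> isect (LEM S) (kdelta (LEM S) F) F"
      then have Gf: "G \<in> facets S" and H: "\<forall>a\<in>chi S ` F. a \<in> chi S ` (F \<inter> G)"
        by (auto simp: LEM_def isect_def)
      have "F \<subseteq> G"
      proof
        fix v assume v: "v \<in> F"
        then obtain u where "u \<in> F" "u \<in> G" "chi S u = chi S v" using H by force
        then have "u = v" using inj[OF fC[OF F]] v by (auto dest: inj_onD)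
        thus "v \<in> G" using \<open>u \<in> G\<close> by simp
      qed
      thus "G \<in> {F}" using F Gf unfolding facets_def by auto
    qed
  qed
  have dl: "a \<in> kdelta (LEM S) v" if "(w, v) \<in> kR (LEM S) a" for a w v
    using that by (auto simp: LEM_def)
  have isd: "\<forall>w\<in>kW (LEM S). \<forall>v\<in>isect (LEM S) (kdelta (LEM S) w) w. kdelta (LEM S) v \<subseteq> kdelta (LEM S) w"
    using prp by (simp add: LEM_def)
  have prp': "\<forall>w\<in>kW (LEM S). isect (LEM S) (kdelta (LEM S) w) w = {w}"
    using prp by (simp add: LEM_def)
  show ?thesis
    unfolding proper_local_epistemic_def local_epistemic_def Let_def
  proof (intro conjI allI impI)
    fix a show "equiv {w \<in> kW (LEM S). a \<in> kdelta (LEM S) w}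
      (kR (LEM S) a \<inter> {w \<in> kW (LEM S). a \<in> kdelta (LEM S) w} \<times> {w \<in> kW (LEM S). a \<in> kdelta (LEM S) w})"
      by (rule eq) (rule refl)
  next
    fix a w v assume "(w, v) \<in> kR (LEM S) a \<and> a \<in> kdelta (LEM S) w"
    then show "a \<in> kdelta (LEM S) v" using dl by blast
  next
    fix a w v p assume "(w, v) \<in> kR (LEM S) a \<and> a \<in> krho (LEM S) p w"
    then show "a \<in> krho (LEM S) p v" using rho by blast
  qed (fact km isd prp')+
qed



lemma chi_SC: "chi (SC M) = fst" by (simp add: SC_def)

lemma lem_R:
  assumes "local_epistemic M" "(w, v) \<in> kR M a"
  shows "w \<in> kW M" "v \<in> kW M" "a \<in> kdelta M w" "a \<in> kdelta M v"
proof -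
  have km: "kripke_model M" using assms(1) unfolding local_epistemic_def by blast
  show w: "w \<in> kW M" "v \<in> kW M" using km assms(2) unfolding kripke_model_def by blast+
  show a: "a \<in> kdelta M w" using km assms(2) w unfolding kripke_model_def by blast
  show "a \<in> kdelta M v" using assms a unfolding local_epistemic_def by blast
qed

lemma lem_equiv:
  assumes "local_epistemic M"
  shows "equiv {w \<in> kW M. a \<in> kdelta M w} (kR M a \<inter> {w \<in> kW M. a \<in> kdelta M w} \<times> {w \<in> kW M. a \<in> kdelta M w})"
proof -
  have "\<forall>a. let D = {w \<in> kW M. a \<in> kdelta M w} in equiv D (kR M a \<inter> D \<times> D)"
    using assms unfolding local_epistemic_def by (elim conjE)
  then have "let D = {w \<in> kW M. a \<in> kdelta M w} in equiv D (kR M a \<inter> D \<times> D)" by (rule spec)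
  then show ?thesis unfolding Let_def .
qed

lemma lem_refl:
  assumes "local_epistemic M" "w \<in> kW M" "a \<in> kdelta M w"
  shows "(w, w) \<in> kR M a"
proof -
  have "(w, w) \<in> kR M a \<inter> {w \<in> kW M. a \<in> kdelta M w} \<times> {w \<in> kW M. a \<in> kdelta M w}"
    using lem_equiv[OF assms(1), of a] assms(2,3) by (elim equivE) (erule refl_onD, simp)
  then show ?thesis by simp
qed

lemma lem_sym:
  assumes "local_epistemic M" "(w, v) \<in> kR M a"
  shows "(v, w) \<in> kR M a"
proof -
  have "(w, v) \<in> kR M a \<inter> {w \<in> kW M. a \<in> kdelta M w} \<times> {w \<in> kW M. a \<in> kdelta M w}"
    using lem_R[OF assms] assms(2) by simp
  then have "(v, w) \<in> kR M a \<inter> {w \<in> kW M. a \<in> kdelta M w} \<times> {w \<in> kW M. a \<in> kdelta M w}"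
    using lem_equiv[OF assms(1), of a] by (elim equivE) (erule symD)
  then show ?thesis by simp
qed

lemma lem_trans:
  assumes "local_epistemic M" "(w, v) \<in> kR M a" "(v, u) \<in> kR M a"
  shows "(w, u) \<in> kR M a"
proof -
  have "(w, v) \<in> kR M a \<inter> {w \<in> kW M. a \<in> kdelta M w} \<times> {w \<in> kW M. a \<in> kdelta M w}"
    using lem_R[OF assms(1,2)] assms(2) by simp
  moreover have "(v, u) \<in> kR M a \<inter> {w \<in> kW M. a \<in> kdelta M w} \<times> {w \<in> kW M. a \<in> kdelta M w}"
    using lem_R[OF assms(1,3)] assms(3) by simp
  ultimately have "(w, u) \<in> kR M a \<inter> {w \<in> kW M. a \<in> kdelta M w} \<times> {w \<in> kW M. a \<in> kdelta M w}"
    using lem_equiv[OF assms(1), of a] by (elim equivE) (erule transD)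
  then show ?thesis by simp
qed

lemma lem_class:
  assumes "local_epistemic M" "w \<in> kW M" "v \<in> kW M"
  shows "(w, v) \<in> kR M a \<longleftrightarrow> a \<in> kdelta M w \<and> a \<in> kdelta M v \<and> kR M a `` {w} = kR M a `` {v}"
proof
  assume h: "(w, v) \<in> kR M a"
  have "kR M a `` {w} = kR M a `` {v}"
    using lem_trans[OF assms(1) h] lem_trans[OF assms(1) lem_sym[OF assms(1) h]] by blast
  thus "a \<in> kdelta M w \<and> a \<in> kdelta M v \<and> kR M a `` {w} = kR M a `` {v}"
    using lem_R[OF assms(1) h] by blast
next
  assume "a \<in> kdelta M w \<and> a \<in> kdelta M v \<and> kR M a `` {w} = kR M a `` {v}"
  thus "(w, v) \<in> kR M a" using lem_refl[OF assms(1,3)] by blast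
qed

lemma Fw_sub:
  assumes "local_epistemic M" "w \<in> kW M" "u \<in> kW M" "Fw M w \<subseteq> Fw M u"
  shows "Fw M u = Fw M w"
proof -
  have h: "a \<in> kdelta M u \<and> kR M a `` {w} = kR M a `` {u}" if "a \<in> kdelta M w" for a
    using assms(4) that unfolding Fw_def by blast
  then have "\<forall>a\<in>kdelta M w. (w, u) \<in> kR M a"
    using lem_class[OF assms(1,2,3)] by blast
  then have "u \<in> isect M (kdelta M w) w" using assms(3) unfolding isect_def by blast
  then have "kdelta M u \<subseteq> kdelta M w" using assms(1,2) unfolding local_epistemic_def by blast
  then show ?thesis using h assms(4) unfolding Fw_def by blast
qed

lemma SC_sm:
  assumes "local_epistemic M"
  shows "simplicial_model (SC M)"
proof -
  have km: "kripke_model M" using assms(1) unfolding local_epistemic_def by blast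
  then obtain w where w: "w \<in> kW M" "kdelta M w \<noteq> {}" unfolding kripke_model_def by blast
  then obtain a where a: "a \<in> kdelta M w" by blast
  have sV: "sV (SC M) = {(a, kR M a `` {w}) |w a. w \<in> kW M \<and> a \<in> kdelta M w}" by (simp add: SC_def)
  have sC: "sC (SC M) = {X. X \<noteq> {} \<and> (\<exists>w\<in>kW M. X \<subseteq> Fw M w)}" by (simp add: SC_def)
  have 1: "sV (SC M) \<noteq> {}" unfolding sV using w a by blast
  have 2: "X \<subseteq> sV (SC M)" if h: "X \<in> sC (SC M)" for X
  proof
    fix y assume y: "y \<in> X"
    obtain u where u: "u \<in> kW M" "X \<subseteq> Fw M u" using h unfolding sC by blast
    then obtain b where "b \<in> kdelta M u" "y = (b, kR M b `` {u})" using y unfolding Fw_def by blast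
    then show "y \<in> sV (SC M)" unfolding sV using u(1) by blast
  qed
  have 3: "{} \<notin> sC (SC M)" unfolding sC by blast
  have 4: "Y \<in> sC (SC M)" if "X \<in> sC (SC M)" "Y \<noteq> {}" "Y \<subseteq> X" for X Y
    using that unfolding sC by blast
  have 5: "{y} \<in> sC (SC M)" if h: "y \<in> sV (SC M)" for y
  proof -
    obtain u b where "u \<in> kW M" "b \<in> kdelta M u" "y = (b, kR M b `` {u})" using h unfolding sV by blast
    then have "{y} \<subseteq> Fw M u" unfolding Fw_def by blast
    then show ?thesis using \<open>u \<in> kW M\<close> unfolding sC by blast
  qed
  have 6: "inj_on (chi (SC M)) X" if h: "X \<in> sC (SC M)" for X
  proof (rule inj_onI)
    fix x y assume xy: "x \<in> X" "y \<in> X" "chi (SC M) x = chi (SC M) y"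
    obtain u where u: "u \<in> kW M" "X \<subseteq> Fw M u" using h unfolding sC by blast
    then have "x \<in> Fw M u" "y \<in> Fw M u" using xy by blast+
    then obtain b c where "x = (b, kR M b `` {u})" "y = (c, kR M c `` {u})" unfolding Fw_def by blast
    then show "x = y" using xy(3) by (simp add: chi_SC)
  qed
  show ?thesis unfolding simplicial_model_def using 1 2 3 4 5 6 by blast
qed

lemma SC_facets:
  assumes "local_epistemic M"
  shows "facets (SC M) = {Fw M w | w. w \<in> kW M}"
proof -
  have km: "kripke_model M" using assms(1) unfolding local_epistemic_def by blast
  have inC: "Fw M w \<in> sC (SC M)" if "w \<in> kW M" for w
  proof -
    have "Fw M w \<noteq> {}" using km that unfolding kripke_model_def Fw_def by blast
    thus ?thesis using that unfolding SC_def by auto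
  qed
  show ?thesis
  proof
    show "facets (SC M) \<subseteq> {Fw M w | w. w \<in> kW M}"
    proof
      fix F assume F: "F \<in> facets (SC M)"
      then obtain w where w: "w \<in> kW M" "F \<subseteq> Fw M w" unfolding facets_def SC_def by auto
      then have "Fw M w = F" using F inC[OF w(1)] unfolding facets_def by blast
      thus "F \<in> {Fw M w | w. w \<in> kW M}" using w by blast
    qed
    show "{Fw M w | w. w \<in> kW M} \<subseteq> facets (SC M)"
    proof
      fix F assume "F \<in> {Fw M w | w. w \<in> kW M}"
      then obtain w where w: "w \<in> kW M" "F = Fw M w" by blast
      have "\<forall>G\<in>sC (SC M). F \<subseteq> G \<longrightarrow> G = F"
      proof (intro ballI impI)
        fix G assume G: "G \<in> sC (SC M)" "F \<subseteq> G"
        then obtain u where u: "u \<in> kW M" "G \<subseteq> Fw M u" unfolding SC_def by auto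
        have "Fw M u = Fw M w" using Fw_sub[OF assms w(1) u(1)] G(2) u(2) w(2) by blast
        thus "G = F" using G(2) u(2) w(2) by blast
      qed
      thus "F \<in> facets (SC M)" using inC[OF w(1)] w(2) unfolding facets_def by blast
    qed
  qed
qed

lemma Fw_pred:
  assumes "local_epistemic M" "w \<in> kW M"
  shows "fst ` (Fw M w \<inter> lab (SC M) p) = krho M p w"
proof
  have km: "kripke_model M" using assms(1) unfolding local_epistemic_def by blast
  show "fst ` (Fw M w \<inter> lab (SC M) p) \<subseteq> krho M p w"
  proof
    fix a assume "a \<in> fst ` (Fw M w \<inter> lab (SC M) p)"
    then obtain u where u: "a \<in> kdelta M w" "u \<in> kW M" "a \<in> krho M p u" "kR M a `` {w} = kR M a `` {u}"
      unfolding Fw_def SC_def by auto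
    have "a \<in> kdelta M u" using u km unfolding kripke_model_def by blast
    then have "(u, w) \<in> kR M a" using lem_class[OF assms(1) u(2) assms(2)] u by blast
    thus "a \<in> krho M p w" using u(3) assms(1) unfolding local_epistemic_def by blast
  qed
  show "krho M p w \<subseteq> fst ` (Fw M w \<inter> lab (SC M) p)"
  proof
    fix a assume a: "a \<in> krho M p w"
    then have "a \<in> kdelta M w" using km assms(2) unfolding kripke_model_def by blast
    then have "(a, kR M a `` {w}) \<in> Fw M w \<inter> lab (SC M) p"
      using a assms(2) unfolding Fw_def SC_def by auto
    thus "a \<in> fst ` (Fw M w \<inter> lab (SC M) p)" by force
  qed
qed

lemma Fw_K:
  assumes "local_epistemic M" "w \<in> kW M" "v \<in> kW M"
  shows "(\<forall>a\<in>A. (w, v) \<in> kR M a) \<longleftrightarrow> A \<subseteq> fst ` (Fw M w \<inter> Fw M v)"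
proof -
  have "fst ` (Fw M w \<inter> Fw M v) = {a. a \<in> kdelta M w \<and> a \<in> kdelta M v \<and> kR M a `` {w} = kR M a `` {v}}"
    unfolding Fw_def by force
  thus ?thesis using lem_class[OF assms] by auto
qed

lemma part2_sat:
  assumes le: "local_epistemic M" and w: "w \<in> kW M"
  shows "sat_k M w \<sigma> \<alpha> \<longleftrightarrow> sat_sc (SC M) (Fw M w) \<sigma> \<alpha>"
  using w
proof (induction \<alpha> arbitrary: w \<sigma>)
  case (Pred p x)
  then show ?case using Fw_pred[OF le Pred] by (simp add: chi_SC)
next
  case (Assign x a \<alpha>)
  have e: "fst ` Fw M w = kdelta M w" unfolding Fw_def by force
  have "sat_k M w \<sigma> (Assign x a \<alpha>) = (a \<in> kdelta M w \<longrightarrow> sat_k M w (\<sigma>(x:=a)) \<alpha>)" by simp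
  also have "\<dots> = (a \<in> chi (SC M) ` Fw M w \<longrightarrow> sat_sc (SC M) (Fw M w) (\<sigma>(x:=a)) \<alpha>)"
    using Assign.IH[OF Assign.prems, of "\<sigma>(x:=a)"] e chi_SC by metis
  also have "\<dots> = sat_sc (SC M) (Fw M w) \<sigma> (Assign x a \<alpha>)" by simp
  finally show ?case .
next
  case (K X \<alpha>)
  show ?case
  proof
    assume L: "sat_k M w \<sigma> (K X \<alpha>)"
    show "sat_sc (SC M) (Fw M w) \<sigma> (K X \<alpha>)"
      unfolding sat_sc.simps
    proof (intro ballI impI)
      fix G assume G: "G \<in> facets (SC M)" "\<sigma> ` X \<subseteq> chi (SC M) ` (Fw M w \<inter> G)"
      then obtain v where v: "v \<in> kW M" "G = Fw M v" using SC_facets[OF le] by auto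
      have "\<sigma> ` X \<subseteq> fst ` (Fw M w \<inter> Fw M v)" using G(2) v by (simp add: chi_SC)
      then have "v \<in> isect M (\<sigma> ` X) w" using Fw_K[OF le K.prems v(1), of "\<sigma> ` X"] v(1)
        unfolding isect_def by blast
      then show "sat_sc (SC M) G \<sigma> \<alpha>" using L K.IH[OF v(1)] v(2) by auto
    qed
  next
    assume R: "sat_sc (SC M) (Fw M w) \<sigma> (K X \<alpha>)"
    show "sat_k M w \<sigma> (K X \<alpha>)"
      unfolding sat_k.simps
    proof
      fix v assume "v \<in> isect M (\<sigma> ` X) w"
      then have v: "v \<in> kW M" "\<forall>a\<in>\<sigma> ` X. (w, v) \<in> kR M a" unfolding isect_def by blast+
      have "\<sigma> ` X \<subseteq> chi (SC M) ` (Fw M w \<inter> Fw M v)"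
        using Fw_K[OF le K.prems v(1)] v(2) by (simp add: chi_SC)
      moreover have "Fw M v \<in> facets (SC M)" using SC_facets[OF le] v(1) by blast
      ultimately show "sat_k M v \<sigma> \<alpha>" using R K.IH[OF v(1)] by auto
    qed
  qed
qed auto

theorem proposition2:
  fixes S :: "('v, 'a::finite, 'p::countable) smodel"
    and M :: "('w, 'a, 'p) kmodel"
  shows
   "(simplicial_model S \<longrightarrow>
       proper_local_epistemic (LEM S) \<and>
       (\<forall>F\<in>facets S. \<forall>\<alpha> :: ('p, 'x::countable, 'a) form. sentence \<alpha> \<longrightarrow>
          (\<forall>\<sigma>. sat_sc S F \<sigma> \<alpha> \<longleftrightarrow> sat_k (LEM S) F \<sigma> \<alpha>))) \<and>
    (local_epistemic M \<longrightarrow>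
       simplicial_model (SC M) \<and>
       facets (SC M) = {Fw M w | w. w \<in> kW M} \<and>
       (\<forall>w\<in>kW M. \<forall>\<alpha> :: ('p, 'x, 'a) form. sentence \<alpha> \<longrightarrow>
          (\<forall>\<sigma>. sat_k M w \<sigma> \<alpha> \<longleftrightarrow> sat_sc (SC M) (Fw M w) \<sigma> \<alpha>)))"
proof (intro conjI impI ballI allI)
  assume "simplicial_model S"
  then show "proper_local_epistemic (LEM S)" by (rule part1_proper)
next
  fix F and \<alpha> :: "('p, 'x, 'a) form" and \<sigma>
  assume "F \<in> facets S"
  then show "sat_sc S F \<sigma> \<alpha> \<longleftrightarrow> sat_k (LEM S) F \<sigma> \<alpha>" by (rule part1_sat)
next
  assume "local_epistemic M"
  then show "simplicial_model (SC M)" by (rule SC_sm)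
next
  assume "local_epistemic M"
  then show "facets (SC M) = {Fw M w | w. w \<in> kW M}" by (rule SC_facets)
next
  fix w and \<alpha> :: "('p, 'x, 'a) form" and \<sigma>
  assume "local_epistemic M" "w \<in> kW M"
  then show "sat_k M w \<sigma> \<alpha> \<longleftrightarrow> sat_sc (SC M) (Fw M w) \<sigma> \<alpha>" by (rule part2_sat)
qed

end
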